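(* For an integer $n>1$ define, for every integer $1<r<n$, $$E^{BW,C}_n(r)=\frac{2r(r-1)}{n^2}\sum_{k=r+1}^{n}\frac{n-k}{(k-1)(k-2)},$$ and let $\mathcal{M}(n)$ be a value of $r$ at which $E^{BW,C}_n$ attains its maximum. Let $$\theta=-\frac{1}{2W_{-1}\!\left(-\frac{1}{2\sqrt e}\right)}=e^{\frac12+W_{-1}\left(-\frac{1}{2\sqrt e}\right)}=0.284668\dots,$$ which is the solution in $(0,1)$ of $2x\log x=x-1$. Then (i) $\lim_{n\to\infty}\mathcal{M}(n)/n=\theta$; (ii) $\lim_{n\to\infty}E^{BW,C}_n(\mathcal{M}(n))=\lim_{n\to\infty}E^{BW,C}_n(\lfloor n\theta\rfloor)=\theta(1-\theta)=0.2036321\dots$.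
   Context: $W_{-1}$ denotes the lower real branch of the Lambert $W$ function, i.e. the inverse of $z\mapsto ze^z$ on $(-\infty,-1]$, defined on $[-1/e,0)$. *)

theory Defs
  imports Complex_Main
begin

text \<open>Lower real branch of Lambert W: inverse of z * exp z on (-inf,-1], for y in [-1/e,0).\<close>
definition lambertW_m1 :: "real \<Rightarrow> real" where
  "lambertW_m1 y = (THE z. z \<le> -1 \<and> z * exp z = y)"

definition E_BWC :: "nat \<Rightarrow> nat \<Rightarrow> real" where
  "E_BWC n r = 2 * real r * (real r - 1) / (real n)^2 *
      (\<Sum>k = r+1..n. (real n - real k) / ((real k - 1) * (real k - 2)))"

definition theta :: real where
  "theta = - 1 / (2 * lambertW_m1 (- 1 / (2 * sqrt (exp 1))))"

end

theory Submission imports Defs begin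

definition ah :: real where "ah = exp (1/2)"

lemma ah_pos: "ah > 0" by (simp add: ah_def)
lemma ah_gt1: "ah \<ge> 3/2" unfolding ah_def using exp_ge_add_one_self[of "1/2::real"] by simp

lemma exp_half_n: "exp (real n / 2) = ah ^ n"
  unfolding ah_def using exp_of_nat_mult[of n "1/2::real"] by simp

lemma exp1_ah: "exp 1 = ah ^ 2" using exp_half_n[of 2] by simp

lemma sqrt_e: "sqrt (exp 1) = ah"
  unfolding exp1_ah using ah_pos by simp

lemma exp_half_lt2: "ah < 2"
proof -
  have "ah ^ 2 \<le> 3" using exp_le exp1_ah by simp
  then have "ah ^ 2 < 2 ^ 2" by simp
  then show ?thesis using ah_pos by (smt (verit) power_mono)
qed

definition pz :: "real \<Rightarrow> real" where "pz z = z * exp z"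

lemma pz_deriv: "DERIV pz z :> (1 + z) * exp z"
  unfolding pz_def by (auto intro!: derivative_eq_intros simp: algebra_simps)

lemma pz_strict: assumes "a < b" "b \<le> -1" shows "pz b < pz a"
proof -
  obtain z where z: "a < z" "z < b" "pz b - pz a = (b - a) * ((1 + z) * exp z)"
    using MVT2[OF assms(1), of pz "\<lambda>z. (1+z)*exp z"] pz_deriv by blast
  have "(1 + z) * exp z < 0" using z assms by (simp add: mult_neg_pos)
  then have "(b - a) * ((1 + z) * exp z) < 0" using assms by (simp add: mult_pos_neg)
  then show ?thesis using z by simp
qed

definition cW :: real where "cW = - 1 / (2 * sqrt (exp 1))"

lemma cW_ah: "cW = - 1 / (2 * ah)" unfolding cW_def sqrt_e by simp

lemma W_ex: "\<exists>z. z \<le> -1 \<and> z * exp z = cW"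
proof -
  have a8: "exp (4::real) = ah ^ 8" using exp_half_n[of 8] by simp
  have a2: "exp (1::real) = ah ^ 2" by (rule exp1_ah)
  have "(3/2::real) ^ 7 \<le> ah ^ 7" using ah_gt1 by (intro power_mono) auto
  moreover have "(8::real) \<le> (3/2)^7" by (simp add: power_divide)
  ultimately have a7: "ah ^ 7 \<ge> 8" by linarith
  have "pz (-4) \<ge> cW"
  proof -
    have "pz (-4) = - 4 / ah ^ 8" unfolding pz_def exp_minus a8 by (simp add: field_simps)
    moreover have "4 / ah ^ 8 \<le> 1 / (2 * ah)"
    proof -
      have e: "ah ^ 8 = ah * ah ^ 7" by (simp add: eval_nat_numeral)
      have "ah * 8 \<le> ah * ah ^ 7" using a7 ah_pos by simp
      then show ?thesis using ah_pos unfolding e by (simp add: field_simps)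
    qed
    ultimately show ?thesis unfolding cW_ah by simp
  qed
  moreover have "cW \<ge> pz (-1)"
  proof -
    have "pz (-1) = - 1 / ah ^ 2" unfolding pz_def exp_minus a2 by (simp add: field_simps)
    moreover have "1 / (2 * ah) \<le> 1 / ah ^ 2"
      using exp_half_lt2 ah_pos by (simp add: field_simps power2_eq_square)
    ultimately show ?thesis unfolding cW_ah by simp
  qed
  moreover have "continuous_on {-4..-1} pz" unfolding pz_def by (intro continuous_intros)
  ultimately obtain z where "-4 \<le> z" "z \<le> -1" "pz z = cW"
    using IVT2'[of pz "-1" cW "-4"] by auto
  then show ?thesis unfolding pz_def by auto
qed

lemma W_props: "lambertW_m1 cW \<le> -1 \<and> lambertW_m1 cW * exp (lambertW_m1 cW) = cW"
proof -
  obtain z where z: "z \<le> -1" "z * exp z = cW" using W_ex by blast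
  have "lambertW_m1 cW = z" unfolding lambertW_m1_def
  proof (rule the_equality)
    show "z \<le> -1 \<and> z * exp z = cW" using z by simp
    fix y assume y: "y \<le> -1 \<and> y * exp y = cW"
    show "y = z"
    proof (rule ccontr)
      assume "y \<noteq> z"
      then consider "y < z" | "z < y" by linarith
      then show False
      proof cases
        case 1 then have "pz z < pz y" using pz_strict z by blast
        then show False using y z unfolding pz_def by simp
      next
        case 2 then have "pz y < pz z" using pz_strict y by blast
        then show False using y z unfolding pz_def by simp
      qed
    qed
  qed
  then show ?thesis using z by simp
qed

definition hh :: "real \<Rightarrow> real" where "hh x = 2 * x * ln x - x + 1"
definition ff :: "real \<Rightarrow> real" where "ff x = 2 * x * (1 - x) + 2 * x^2 * ln x"

lemma hh_deriv: "x > 0 \<Longrightarrow> DERIV hh x :> 2 * ln x + 1"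
  unfolding hh_def by (auto intro!: derivative_eq_intros simp: algebra_simps)

lemma ff_deriv: "x > 0 \<Longrightarrow> DERIV ff x :> 2 * hh x"
  unfolding ff_def hh_def by (auto intro!: derivative_eq_intros simp: algebra_simps power2_eq_square)

lemma ln_iah: "ln (1 / ah) = - 1/2"
  unfolding ah_def by (simp add: ln_div)

lemma hh_dec: assumes "0 < a" "a < b" "b \<le> 1 / ah" shows "hh b < hh a"
proof -
  obtain z where z: "a < z" "z < b" "hh b - hh a = (b - a) * (2 * ln z + 1)"
    using MVT2[OF assms(2), of hh "\<lambda>z. 2 * ln z + 1"] hh_deriv assms(1) by force
  have "ln z < ln (1 / ah)" using z assms ah_pos by simp
  then have "2 * ln z + 1 < 0" unfolding ln_iah by simp
  then have "(b - a) * (2 * ln z + 1) < 0" using assms by (simp add: mult_pos_neg)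
  then show ?thesis using z by simp
qed

lemma hh_inc: assumes "1 / ah \<le> a" "a < b" shows "hh a < hh b"
proof -
  have a0: "a > 0" using assms(1) ah_pos by (smt (verit) divide_pos_pos)
  obtain z where z: "a < z" "z < b" "hh b - hh a = (b - a) * (2 * ln z + 1)"
    using MVT2[OF assms(2), of hh "\<lambda>z. 2 * ln z + 1"] hh_deriv a0 by force
  have "ln (1 / ah) < ln z" using z assms ah_pos a0 by simp
  then have "2 * ln z + 1 > 0" unfolding ln_iah by simp
  then have "(b - a) * (2 * ln z + 1) > 0" using assms by simp
  then show ?thesis using z by simp
qed

lemma hh_1: "hh 1 = 0" by (simp add: hh_def)

definition wW :: real where "wW = lambertW_m1 cW"

lemma theta_w: "theta = - 1 / (2 * wW)"
  unfolding theta_def wW_def cW_def by simp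

lemma wW_le: "wW \<le> -1" and wW_eq: "wW * exp wW = cW"
  using W_props unfolding wW_def by auto

lemma theta_pos: "theta > 0" unfolding theta_w using wW_le by (simp add: divide_neg_neg)

lemma theta_half: "theta \<le> 1/2" unfolding theta_w using wW_le by (simp add: field_simps)

lemma theta_exp: "theta = exp (1/2 + wW)"
proof -
  have "exp wW = cW / wW" using wW_eq wW_le by (simp add: field_simps)
  then have "exp wW = - 1 / (2 * ah * wW)" unfolding cW_ah by simp
  moreover have "exp (1/2 + wW) = ah * exp wW" unfolding ah_def by (simp add: exp_add)
  ultimately show ?thesis unfolding theta_w using ah_pos wW_le by (simp add: field_simps)
qed

lemma theta_ln: "ln theta = 1/2 + wW" by (simp add: theta_exp)

lemma theta_root: "2 * theta * ln theta = theta - 1"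
proof -
  have "2 * theta * wW = -1" unfolding theta_w using wW_le by (simp add: field_simps)
  then show ?thesis unfolding theta_ln by (simp add: algebra_simps)
qed

lemma hh_theta: "hh theta = 0" using theta_root by (simp add: hh_def)

lemma theta_lt_iah: "theta < 1 / ah"
proof -
  have "ah * theta \<le> ah * (1/2)" using theta_half ah_pos by (intro mult_left_mono) auto
  then have "ah * theta < 1" using exp_half_lt2 by simp
  then show ?thesis using ah_pos by (simp add: field_simps)
qed

lemma hh_pos: "0 < x \<Longrightarrow> x < theta \<Longrightarrow> hh x > 0"
  using hh_dec[of x theta] theta_lt_iah hh_theta by simp

lemma hh_neg: assumes "theta < x" "x < 1" shows "hh x < 0"
proof (cases "x \<le> 1 / ah")
  case True then show ?thesis using hh_dec[of theta x] theta_pos hh_theta assms by simp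
next
  case False then show ?thesis using hh_inc[of x 1] hh_1 assms by simp
qed

lemma root_unique: "0 < x \<Longrightarrow> x < 1 \<Longrightarrow> 2 * x * ln x = x - 1 \<Longrightarrow> x = theta"
proof -
  assume h: "0 < x" "x < 1" "2 * x * ln x = x - 1"
  then have "hh x = 0" by (simp add: hh_def)
  then show "x = theta" using hh_pos[of x] hh_neg[of x] h by (cases x theta rule: linorder_cases) auto
qed

lemma ff_inc: assumes "0 < a" "a < b" "b \<le> theta" shows "ff a < ff b"
proof -
  obtain z where z: "a < z" "z < b" "ff b - ff a = (b - a) * (2 * hh z)"
    using MVT2[OF assms(2), of ff "\<lambda>z. 2 * hh z"] ff_deriv assms(1) by force
  have "hh z > 0" using hh_pos z assms by simp
  then have "(b - a) * (2 * hh z) > 0" using assms by simp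
  then show ?thesis using z by linarith
qed

lemma ff_dec: assumes "theta \<le> a" "a < b" "b < 1" shows "ff b < ff a"
proof -
  obtain z where z: "a < z" "z < b" "ff b - ff a = (b - a) * (2 * hh z)"
    using MVT2[OF assms(2), of ff "\<lambda>z. 2 * hh z"] ff_deriv assms(1) theta_pos by force
  have "hh z < 0" using hh_neg z assms by simp
  then have "(b - a) * (2 * hh z) < 0" using assms by (simp add: mult_pos_neg)
  then show ?thesis using z by linarith
qed

lemma ff_max: "0 < x \<Longrightarrow> x < 1 \<Longrightarrow> ff x \<le> ff theta"
  using ff_inc[of x theta] ff_dec[of theta x] theta_half
  by (cases x theta rule: linorder_cases) auto

lemma ff_theta: "ff theta = theta * (1 - theta)"
proof -
  have "2 * theta^2 * ln theta = theta * (theta - 1)" using theta_root by (simp add: power2_eq_square)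
  then show ?thesis unfolding ff_def by (simp add: algebra_simps)
qed


lemma tele:
  assumes "2 \<le> r" "r \<le> n"
  shows "(\<Sum>k=r+1..n. 1/((real k - 1)*(real k - 2))) = 1/(real r - 1) - 1/(real n - 1)"
  using assms(2)
proof (induction n rule: dec_induct)
  case base then show ?case by simp
next
  case (step m)
  have m2: "real m - 1 > 0" "real m > 0" using step assms by auto
  have "(\<Sum>k=r+1..Suc m. 1/((real k - 1)*(real k - 2)))
      = (\<Sum>k=r+1..m. 1/((real k - 1)*(real k - 2))) + 1/(real m * (real m - 1))"
    using step by simp
  also have "\<dots> = 1/(real r - 1) - 1/(real m - 1) + 1/(real m * (real m - 1))"
    using step.IH by simp
  also have "\<dots> = 1/(real r - 1) - 1/(real (Suc m) - 1)"
  proof -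
    have "1/(real m - 1) = real m / (real m * (real m - 1))" using m2 by simp
    then have "1/(real m - 1) - 1/(real m * (real m - 1)) = (real m - 1) / (real m * (real m - 1))"
      by (simp add: diff_divide_distrib)
    also have "\<dots> = 1 / real m" using m2 by simp
    finally have "1/(real m - 1) - 1/(real m * (real m - 1)) = 1 / real m" .
    then show ?thesis by simp
  qed
  finally show ?case .
qed

lemma logs:
  assumes "2 \<le> r" "r \<le> n"
  shows "ln (real n) - ln (real r) \<le> (\<Sum>k=r+1..n. 1/(real k - 1))
     \<and> (\<Sum>k=r+1..n. 1/(real k - 1)) \<le> ln (real n - 1) - ln (real r - 1)"
  using assms(2)
proof (induction n rule: dec_induct)
  case base then show ?case by simp
next
  case (step m)
  have m2: "real m - 1 > 0" "real m > 0" using step assms by auto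
  have s: "(\<Sum>k=r+1..Suc m. 1/(real k - 1)) = (\<Sum>k=r+1..m. 1/(real k - 1)) + 1 / real m"
    using step by simp
  have l1: "ln (real m + 1) - ln (real m) \<le> 1 / real m"
  proof -
    have "ln ((real m + 1) / real m) \<le> (real m + 1) / real m - 1"
      using m2 by (intro ln_le_minus_one) auto
    then show ?thesis using m2 by (simp add: ln_div field_simps)
  qed
  have l2: "1 / real m \<le> ln (real m) - ln (real m - 1)"
  proof -
    have "ln ((real m - 1) / real m) \<le> (real m - 1) / real m - 1"
      using m2 by (intro ln_le_minus_one) auto
    then show ?thesis using m2 by (simp add: ln_div field_simps)
  qed
  show ?case unfolding s using step.IH l1 l2 by (simp add: add.commute)
qed

lemma closed_form:
  assumes "2 \<le> r" "r \<le> n"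
  shows "E_BWC n r = 2 * real r * (real r - 1) / (real n)^2 *
     ((real n - 2) * (1/(real r - 1) - 1/(real n - 1)) - (\<Sum>k=r+1..n. 1/(real k - 1)))"
proof -
  have "(\<Sum>k = r+1..n. (real n - real k) / ((real k - 1) * (real k - 2)))
     = (\<Sum>k = r+1..n. (real n - 2) * (1/((real k - 1) * (real k - 2))) - 1/(real k - 1))"
  proof (rule sum.cong)
    fix k assume "k \<in> {r+1..n}"
    then have k: "real k - 1 > 0" "real k - 2 > 0" using assms by auto
    have "(real n - real k) / ((real k - 1) * (real k - 2))
       = ((real n - 2) - (real k - 2)) / ((real k - 1) * (real k - 2))" by simp
    also have "\<dots> = (real n - 2) / ((real k - 1) * (real k - 2)) - (real k - 2) / ((real k - 1) * (real k - 2))"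
      by (rule diff_divide_distrib)
    also have "(real k - 2) / ((real k - 1) * (real k - 2)) = 1 / (real k - 1)" using k by simp
    finally show "(real n - real k) / ((real k - 1) * (real k - 2))
       = (real n - 2) * (1/((real k - 1) * (real k - 2))) - 1/(real k - 1)"
      by simp
  qed simp
  also have "\<dots> = (\<Sum>k = r+1..n. (real n - 2) * (1/((real k - 1) * (real k - 2)))) - (\<Sum>k=r+1..n. 1/(real k - 1))"
    by (rule sum_subtractf)
  also have "\<dots> = (real n - 2) * (\<Sum>k = r+1..n. 1/((real k - 1) * (real k - 2))) - (\<Sum>k=r+1..n. 1/(real k - 1))"
    by (simp only: sum_distrib_left)
  also have "\<dots> = (real n - 2) * (1/(real r - 1) - 1/(real n - 1)) - (\<Sum>k=r+1..n. 1/(real k - 1))"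
    by (simp only: tele[OF assms])
  finally show ?thesis unfolding E_BWC_def by simp
qed

lemma approx:
  assumes "3 \<le> n" "1 < r" "r < n"
  shows "\<bar>E_BWC n r - ff (real r / real n)\<bar> \<le> 6 / real n"
proof -
  define R where "R = real r"
  define N where "N = real n"
  define D where "D = (\<Sum>k=r+1..n. 1/(real k - 1))"
  define L where "L = ln N - ln R"
  have R2: "R \<ge> 2" and NR: "N \<ge> R + 1" and N3: "N \<ge> 3" using assms unfolding R_def N_def by auto
  have lg: "L \<le> D" "D \<le> ln (N - 1) - ln (R - 1)"
    using logs[of r n] assms unfolding L_def D_def R_def N_def by auto
  have "ln (N - 1) \<le> ln N" using N3 by simp
  moreover have "ln R - ln (R - 1) \<le> 1 / (R - 1)"
  proof -
    have "ln (R / (R - 1)) \<le> R / (R - 1) - 1" using R2 by (intro ln_le_minus_one) auto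
    then show ?thesis using R2 by (simp add: ln_div field_simps)
  qed
  ultimately have DL: "D - L \<le> 1 / (R - 1)" using lg unfolding L_def by linarith
  define a where "a = (R - 1) * (D - L)"
  have a0: "0 \<le> a" unfolding a_def using lg R2 by simp
  have a1: "a \<le> 1"
  proof -
    have "a \<le> (R - 1) * (1 / (R - 1))" unfolding a_def using DL R2 by (intro mult_left_mono) auto
    then show ?thesis using R2 by simp
  qed
  have L0: "0 \<le> L" unfolding L_def using NR R2 by simp
  have L1: "L \<le> N / R - 1"
  proof -
    have "ln (N / R) \<le> N / R - 1" using NR R2 by (intro ln_le_minus_one) auto
    then show ?thesis unfolding L_def using NR R2 by (simp add: ln_div)
  qed
  have E: "E_BWC n r = 2 * R * (R - 1) / N^2 * ((N - 2) * (1/(R - 1) - 1/(N - 1)) - D)"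
    using closed_form[of r n] assms unfolding R_def N_def D_def by simp
  have F: "ff (real r / real n) = 2 * (R/N) * (1 - R/N) - 2 * (R/N)^2 * L"
    unfolding ff_def L_def R_def N_def using assms by (simp add: ln_div algebra_simps)
  define K where "K = 2 * R / N^2"
  have K0: "K \<ge> 0" unfolding K_def using R2 by simp
  have s1: "(R - 1) * ((N - 2) * (1/(R - 1) - 1/(N - 1))) = (N - R) - (N - R)/(N - 1)"
  proof -
    define u where "u = R - 1"
    define v where "v = N - 1"
    have u: "u > 0" and v: "v > 0" unfolding u_def v_def using R2 N3 by auto
    have "u * ((v - 1) * (1/u - 1/v)) = (v - u) - (v - u)/v" using u v by (simp add: field_simps)
    moreover have "R = u + 1" "N = v + 1" unfolding u_def v_def by auto
    ultimately show ?thesis by simp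
  qed
  have E': "E_BWC n r = K * ((N - R) - (N - R)/(N - 1)) - K * ((R - 1) * D)"
  proof -
    have "2 * R * (R - 1) / N^2 = K * (R - 1)" unfolding K_def by simp
    then have "E_BWC n r = K * (R - 1) * (((N - 2) * (1/(R - 1) - 1/(N - 1))) - D)"
      unfolding E by (simp only:)
    moreover have gen: "\<And>K c X D::real. K*c*(X-D) = K*(c*X) - K*(c*D)" by (simp add: algebra_simps)
    ultimately have "E_BWC n r = K * ((R - 1) * ((N - 2) * (1/(R - 1) - 1/(N - 1)))) - K * ((R - 1) * D)"
      by (simp only:)
    then show ?thesis unfolding s1 .
  qed
  have F': "ff (real r / real n) = K * (N - R) - K * (R * L)"
  proof -
    have "2 * (R/N) * (1 - R/N) = K * (N - R)" unfolding K_def using N3 by (simp add: field_simps power2_eq_square)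
    moreover have "2 * (R/N)^2 * L = K * (R * L)" unfolding K_def using N3 by (simp add: field_simps power2_eq_square)
    ultimately show ?thesis unfolding F by simp
  qed
  define T1 where "T1 = K * ((N - R) / (N - 1))"
  define T2 where "T2 = K * (a - L)"
  have id: "E_BWC n r - ff (real r / real n) = - T1 - T2"
    unfolding E' F' T1_def T2_def a_def by (simp add: algebra_simps)
  have T1a: "0 \<le> T1" unfolding T1_def using NR R2 K0 by simp
  have T1b: "T1 \<le> 2 / (N - 1)"
  proof -
    have "R * (N - R) \<le> N * N" using NR R2 by (intro mult_mono) auto
    then have "2 * R * (N - R) \<le> 2 * (N^2)" by (simp add: power2_eq_square)
    then have "2 * R * (N - R) / (N^2 * (N - 1)) \<le> 2 * (N^2) / (N^2 * (N - 1))"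
      using N3 by (intro divide_right_mono) auto
    moreover have "T1 = 2 * R * (N - R) / (N^2 * (N - 1))" unfolding T1_def K_def by simp
    ultimately show ?thesis using N3 by simp
  qed
  have T2b: "\<bar>T2\<bar> \<le> 2 / N"
  proof -
    have "\<bar>a - L\<bar> \<le> N / R" using a0 a1 L0 L1 by linarith
    then have m: "2 * R / N^2 * \<bar>a - L\<bar> \<le> 2 * R / N^2 * (N / R)"
      using R2 by (intro mult_left_mono) auto
    have c: "\<bar>2 * R / N^2\<bar> = 2 * R / N^2" using R2 by simp
    have "\<bar>T2\<bar> \<le> 2 * R / N^2 * (N / R)" unfolding T2_def abs_mult K_def c using m .
    also have "\<dots> = 2 / N" using R2 N3 by (simp add: field_simps power2_eq_square)
    finally show ?thesis .
  qed
  have "2 / (N - 1) \<le> 4 / N" using N3 by (simp add: field_simps)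
  then have "\<bar>E_BWC n r - ff (real r / real n)\<bar> \<le> 6 / N" unfolding id using T1a T1b T2b by linarith
  then show ?thesis unfolding N_def .
qed


lemma ff_cont: "(y \<longlongrightarrow> theta) F \<Longrightarrow> ((\<lambda>n. ff (y n)) \<longlongrightarrow> ff theta) F"
  unfolding ff_def using theta_pos by (intro tendsto_intros) auto

lemma ff_sep:
  assumes "e > 0"
  shows "\<exists>d>0. \<forall>y. 0 < y \<and> y < 1 \<and> \<bar>y - theta\<bar> \<ge> e \<longrightarrow> ff y \<le> ff theta - d"
proof -
  define d1 where "d1 = (if theta - e > 0 then ff theta - ff (theta - e) else 1)"
  define d2 where "d2 = (if theta + e < 1 then ff theta - ff (theta + e) else 1)"
  have d1: "d1 > 0" unfolding d1_def using ff_inc[of "theta - e" theta] assms by auto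
  have d2: "d2 > 0" unfolding d2_def using ff_dec[of theta "theta + e"] assms by auto
  have "\<forall>y. 0 < y \<and> y < 1 \<and> \<bar>y - theta\<bar> \<ge> e \<longrightarrow> ff y \<le> ff theta - min d1 d2"
  proof (intro allI impI)
    fix y assume y: "0 < y \<and> y < 1 \<and> \<bar>y - theta\<bar> \<ge> e"
    then consider "y \<le> theta - e" | "y \<ge> theta + e" by linarith
    then show "ff y \<le> ff theta - min d1 d2"
    proof cases
      case 1
      then have p: "theta - e > 0" using y by linarith
      have "ff y \<le> ff (theta - e)"
        using ff_inc[of y "theta - e"] 1 y assms by (cases "y = theta - e") auto
      then show ?thesis unfolding d1_def using p by simp
    next
      case 2
      then have p: "theta + e < 1" using y by linarith
      have "ff y \<le> ff (theta + e)"
        using ff_dec[of "theta + e" y] 2 y assms theta_pos by (cases "y = theta + e") auto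
      then show ?thesis unfolding d2_def using p by simp
    qed
  qed
  then show ?thesis using d1 d2 by (intro exI[of _ "min d1 d2"]) auto
qed

theorem theorem3:
  fixes M :: "nat \<Rightarrow> nat"
  assumes M_range: "\<And>n. n \<ge> 3 \<Longrightarrow> 1 < M n \<and> M n < n"
    and M_max: "\<And>n r. n \<ge> 3 \<Longrightarrow> 1 < r \<Longrightarrow> r < n \<Longrightarrow> E_BWC n r \<le> E_BWC n (M n)"
  shows "theta = exp (1/2 + lambertW_m1 (- 1 / (2 * sqrt (exp 1))))
    \<and> 0 < theta \<and> theta < 1 \<and> 2 * theta * ln theta = theta - 1
    \<and> (\<forall>x. 0 < x \<and> x < 1 \<and> 2 * x * ln x = x - 1 \<longrightarrow> x = theta)
    \<and> ((\<lambda>n. real (M n) / real n) \<longlonglongrightarrow> theta)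
    \<and> ((\<lambda>n. E_BWC n (M n)) \<longlonglongrightarrow> theta * (1 - theta))
    \<and> ((\<lambda>n. E_BWC n (nat \<lfloor>real n * theta\<rfloor>)) \<longlonglongrightarrow> theta * (1 - theta))"
proof -
  have p1: "theta = exp (1/2 + lambertW_m1 (- 1 / (2 * sqrt (exp 1))))"
    using theta_exp unfolding wW_def cW_def .
  have th1: "theta < 1" using theta_half by simp
  define t where "t n = nat \<lfloor>real n * theta\<rfloor>" for n
  define x where "x n = real (M n) / real n" for n
  obtain N0 :: nat where N0: "2 / theta < real N0" using reals_Archimedean2 by blast
  define N1 where "N1 = max 3 N0"
  have tb: "1 < t n \<and> t n < n \<and> theta - 1 / real n \<le> real (t n) / real n \<and> real (t n) / real n \<le> theta"
    if n: "n \<ge> N1" for n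
  proof -
    have n3: "real n \<ge> 3" and n0: "real n \<ge> real N0" using n unfolding N1_def by auto
    have "2 / theta < real n" using N0 n0 by linarith
    then have g2: "real n * theta > 2" using theta_pos by (simp add: field_simps)
    have fl: "real n * theta - 1 < of_int \<lfloor>real n * theta\<rfloor>" "of_int \<lfloor>real n * theta\<rfloor> \<le> real n * theta"
      by linarith+
    have f2: "\<lfloor>real n * theta\<rfloor> \<ge> 2" using g2 by linarith
    then have rt: "real (t n) = of_int \<lfloor>real n * theta\<rfloor>" unfolding t_def by simp
    have t2: "t n \<ge> 2" unfolding t_def using f2 by (simp add: le_nat_iff)
    have "real n * theta < real n" using th1 n3 by simp
    then have "real (t n) < real n" using rt fl by linarith
    then have "t n < n" by simp
    moreover have "theta - 1 / real n \<le> real (t n) / real n"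
    proof -
      have "(real n * theta - 1) / real n \<le> real (t n) / real n"
        using fl rt n3 by (intro divide_right_mono) auto
      moreover have "(real n * theta - 1) / real n = theta - 1 / real n" using n3 by (simp add: field_simps)
      ultimately show ?thesis by simp
    qed
    moreover have "real (t n) / real n \<le> theta" using fl rt n3 by (simp add: field_simps)
    ultimately show ?thesis using t2 by simp
  qed
  have evN: "eventually (\<lambda>n. n \<ge> N1) sequentially" by (rule eventually_ge_at_top)
  have lim0: "(\<lambda>n. 6 / real n) \<longlonglongrightarrow> 0" by (rule lim_const_over_n)
  have tlim: "(\<lambda>n. real (t n) / real n) \<longlonglongrightarrow> theta"
  proof (rule tendsto_sandwich[of "\<lambda>n. theta - 1 / real n" _ _ "\<lambda>n. theta"])
    show "eventually (\<lambda>n. theta - 1 / real n \<le> real (t n) / real n) sequentially"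
      using evN by eventually_elim (use tb in auto)
    show "eventually (\<lambda>n. real (t n) / real n \<le> theta) sequentially"
      using evN by eventually_elim (use tb in auto)
    show "(\<lambda>n. theta - 1 / real n) \<longlonglongrightarrow> theta"
      using tendsto_diff[OF tendsto_const[of theta] lim_const_over_n[of 1]] by simp
  qed simp
  have fft: "(\<lambda>n. ff (real (t n) / real n)) \<longlonglongrightarrow> ff theta" by (rule ff_cont[OF tlim])
  have Et: "(\<lambda>n. E_BWC n (t n)) \<longlonglongrightarrow> ff theta"
  proof (rule tendsto_sandwich[of "\<lambda>n. ff (real (t n) / real n) - 6 / real n" _ _
        "\<lambda>n. ff (real (t n) / real n) + 6 / real n"])
    show "eventually (\<lambda>n. ff (real (t n) / real n) - 6 / real n \<le> E_BWC n (t n)) sequentially"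
      using evN
    proof eventually_elim
      case (elim n)
      then have "n \<ge> 3" unfolding N1_def by simp
      then show ?case using approx[of n "t n"] tb[OF elim] by auto
    qed
    show "eventually (\<lambda>n. E_BWC n (t n) \<le> ff (real (t n) / real n) + 6 / real n) sequentially"
      using evN
    proof eventually_elim
      case (elim n)
      then have "n \<ge> 3" unfolding N1_def by simp
      then show ?case using approx[of n "t n"] tb[OF elim] by auto
    qed
    show "(\<lambda>n. ff (real (t n) / real n) - 6 / real n) \<longlonglongrightarrow> ff theta"
      using tendsto_diff[OF fft lim0] by simp
    show "(\<lambda>n. ff (real (t n) / real n) + 6 / real n) \<longlonglongrightarrow> ff theta"
      using tendsto_add[OF fft lim0] by simp
  qed
  have xr: "0 < x n \<and> x n < 1" if "n \<ge> 3" for n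
    using M_range[OF that] that unfolding x_def by (simp add: field_simps)
  have EM: "(\<lambda>n. E_BWC n (M n)) \<longlonglongrightarrow> ff theta"
  proof (rule tendsto_sandwich[of "\<lambda>n. E_BWC n (t n)" _ _ "\<lambda>n. ff theta + 6 / real n"])
    show "eventually (\<lambda>n. E_BWC n (t n) \<le> E_BWC n (M n)) sequentially"
      using evN
    proof eventually_elim
      case (elim n)
      then have "n \<ge> 3" unfolding N1_def by simp
      then show ?case using M_max[of n "t n"] tb[OF elim] by auto
    qed
    show "eventually (\<lambda>n. E_BWC n (M n) \<le> ff theta + 6 / real n) sequentially"
      using evN
    proof eventually_elim
      case (elim n)
      then have n3: "n \<ge> 3" unfolding N1_def by simp
      have "E_BWC n (M n) \<le> ff (x n) + 6 / real n"
        using approx[of n "M n"] M_range[OF n3] n3 unfolding x_def by auto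
      moreover have "ff (x n) \<le> ff theta" using ff_max xr[OF n3] by auto
      ultimately show ?case by simp
    qed
    show "(\<lambda>n. ff theta + 6 / real n) \<longlonglongrightarrow> ff theta"
      using tendsto_add[OF tendsto_const[of "ff theta"] lim0] by simp
  qed (rule Et)
  have ffx: "(\<lambda>n. ff (x n)) \<longlonglongrightarrow> ff theta"
  proof (rule tendsto_sandwich[of "\<lambda>n. E_BWC n (M n) - 6 / real n" _ _ "\<lambda>n. ff theta"])
    show "eventually (\<lambda>n. E_BWC n (M n) - 6 / real n \<le> ff (x n)) sequentially"
      using evN
    proof eventually_elim
      case (elim n)
      then have n3: "n \<ge> 3" unfolding N1_def by simp
      show ?case using approx[of n "M n"] M_range[OF n3] n3 unfolding x_def by auto
    qed
    show "eventually (\<lambda>n. ff (x n) \<le> ff theta) sequentially"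
      using evN
    proof eventually_elim
      case (elim n)
      then have n3: "n \<ge> 3" unfolding N1_def by simp
      show ?case using ff_max xr[OF n3] by auto
    qed
    show "(\<lambda>n. E_BWC n (M n) - 6 / real n) \<longlonglongrightarrow> ff theta"
      using tendsto_diff[OF EM lim0] by simp
  qed simp
  have xlim: "x \<longlonglongrightarrow> theta"
  proof (rule tendstoI)
    fix e :: real assume e: "e > 0"
    obtain d where d: "d > 0" "\<And>y. 0 < y \<and> y < 1 \<and> \<bar>y - theta\<bar> \<ge> e \<Longrightarrow> ff y \<le> ff theta - d"
      using ff_sep[OF e] by blast
    have "eventually (\<lambda>n. ff theta - d < ff (x n)) sequentially"
      using order_tendstoD(1)[OF ffx] d(1) by simp
    then show "eventually (\<lambda>n. dist (x n) theta < e) sequentially"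
      using evN
    proof eventually_elim
      case (elim n)
      then have n3: "n \<ge> 3" unfolding N1_def by simp
      show ?case
      proof (rule ccontr)
        assume "\<not> dist (x n) theta < e"
        then have "\<bar>x n - theta\<bar> \<ge> e" by (simp add: dist_real_def)
        then have "ff (x n) \<le> ff theta - d" using d(2) xr[OF n3] by blast
        then show False using elim by simp
      qed
    qed
  qed
  show ?thesis
    using p1 theta_pos th1 theta_root root_unique xlim EM Et ff_theta
    unfolding x_def t_def by auto
qed

end
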